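(* Let $\delta_n=\frac{n+2}{n+1}$ and $\mu_n=n^{3/2}$ ($n\ge0$), let $p_n=\mu_{n+1}/\mu_n=\big(\frac{n+1}{n}\big)^{3/2}$, and let $g_n$ ($n\ge1$) be defined by $g_1=\frac{\mu_2}{\mu_1}\big(\frac{2\delta_2}{\delta_3}+\frac{\delta_1}{\delta_3}+1\big)-\frac{\mu_3}{\mu_1}$ and, for $n\ge2$, $$g_n=\frac{\mu_{n+1}}{\mu_n\delta_{n+1}\delta_{n+2}}\Big[2\delta_{n+1}^2+\delta_n\delta_{n+1}+\delta_{n+1}\delta_{n+2}-\frac{\mu_{n+2}}{\mu_{n+1}}\delta_{n+1}\delta_{n+2}-\frac{\mu_{n-1}}{\mu_n}\delta_n\delta_{n+1}-\frac{\mu_{n+1}}{\mu_n g_{n-1}}\delta_n\delta_{n+1}\Big].$$ Then for every $n\in\mathbb{N}$, $p_np_{n+1}<g_n<p_np_{n+1}p_{n+2}$ (in particular every $g_n$ is well defined and positive). *)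

theory Defs
  imports Complex_Main
begin

definition delta :: "nat \<Rightarrow> real" where
  "delta n = (real n + 2) / (real n + 1)"

definition mu :: "nat \<Rightarrow> real" where
  "mu n = real n powr (3/2)"

definition p :: "nat \<Rightarrow> real" where
  "p n = mu (n+1) / mu n"

text \<open>g is only meaningful for n \<ge> 1; the value at 0 is an unused placeholder.\<close>
fun g :: "nat \<Rightarrow> real" where
  "g 0 = 0"
| "g (Suc 0) = mu 2 / mu 1 * (2 * delta 2 / delta 3 + delta 1 / delta 3 + 1) - mu 3 / mu 1"
| "g (Suc (Suc m)) = (let n = Suc (Suc m) in
     mu (n+1) / (mu n * delta (n+1) * delta (n+2)) *
     (2 * (delta (n+1))^2 + delta n * delta (n+1) + delta (n+1) * delta (n+2)
      - mu (n+2) / mu (n+1) * delta (n+1) * delta (n+2)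
      - mu (n-1) / mu n * delta n * delta (n+1)
      - mu (n+1) / (mu n * g (n-1)) * delta n * delta (n+1)))"

end

theory Submission
  imports Defs
begin

lemma mu_eq: "mu k = real k * sqrt (real k)"
proof (cases "k = 0")
  case True thus ?thesis by (simp add: mu_def)
next
  case False
  hence "real k > 0" by simp
  have "real k powr (3/2) = real k * real k powr (1/2)"
    using powr_mult_base[of "real k" "1/2"] by simp
  also have "\<dots> = real k * sqrt (real k)" using \<open>real k > 0\<close> by (simp add: powr_half_sqrt)
  finally show ?thesis by (simp add: mu_def)
qed

lemma ratio: "u > 0 \<Longrightarrow> v > 0 \<Longrightarrow> (u * sqrt u) / (v * sqrt v) = (u/v) * sqrt (u/v)"
  by (simp add: real_sqrt_divide)

lemma tsqrt: "(t::real) \<ge> 0 \<Longrightarrow> t * sqrt t = sqrt (t^3)"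
proof -
  assume "t \<ge> 0"
  have "t^3 = t^2 * t" by (simp add: power3_eq_cube power2_eq_square)
  thus ?thesis using \<open>t \<ge> 0\<close> by (simp add: real_sqrt_mult)
qed

definition L3 :: "real \<Rightarrow> real" where "L3 x = 1 + 3/2*x + 3/8*x^2 - 1/16*x^3"
definition U2 :: "real \<Rightarrow> real" where "U2 x = 1 + 3/2*x + 3/8*x^2"
definition Ld :: "real \<Rightarrow> real" where "Ld y = 1 - 3/2*y + 3/8*y^2"
definition Ud :: "real \<Rightarrow> real" where "Ud y = 1 - 3/2*y + 3/8*y^2 + 1/8*y^3"

lemma up_bounds:
  assumes "0 \<le> x" "x \<le> 1"
  shows "L3 x \<le> (1+x) * sqrt (1+x) \<and> (1+x) * sqrt (1+x) \<le> U2 x"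
proof -
  have e: "(1+x) * sqrt (1+x) = sqrt ((1+x)^3)" using assms by (simp add: tsqrt)
  have "(L3 x)^2 = (1+x)^3 - x^4 * (3/64 + 3/64*x - x^2/256)"
    by (simp add: L3_def power2_eq_square power3_eq_cube power4_eq_xxxx algebra_simps)
  moreover have "x^4 * (3/64 + 3/64*x - x^2/256) \<ge> 0"
  proof -
    have "x^2 \<le> 1" using assms by (simp add: power_le_one)
    thus ?thesis using assms by (intro mult_nonneg_nonneg) auto
  qed
  ultimately have l: "(L3 x)^2 \<le> (1+x)^3" by linarith
  have "(U2 x)^2 = (1+x)^3 + x^3/8 + 9/64*x^4"
    by (simp add: U2_def power2_eq_square power3_eq_cube power4_eq_xxxx algebra_simps)
  hence u: "(1+x)^3 \<le> (U2 x)^2" using assms by simp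
  have "U2 x \<ge> 0" using assms by (simp add: U2_def)
  thus ?thesis unfolding e using l u by (auto intro: real_le_rsqrt real_le_lsqrt)
qed

lemma down_bounds:
  assumes "0 \<le> y" "y \<le> 1/2"
  shows "Ld y \<le> (1-y) * sqrt (1-y) \<and> (1-y) * sqrt (1-y) \<le> Ud y"
proof -
  have e: "(1-y) * sqrt (1-y) = sqrt ((1-y)^3)" using assms by (simp add: tsqrt)
  have "(Ld y)^2 = (1-y)^3 - y^3 * (1/8 - 9/64*y)"
    by (simp add: Ld_def power2_eq_square power3_eq_cube algebra_simps)
  moreover have "y^3 * (1/8 - 9/64*y) \<ge> 0" using assms by (intro mult_nonneg_nonneg) auto
  ultimately have l: "(Ld y)^2 \<le> (1-y)^3" by linarith
  have "(Ud y)^2 = (1-y)^3 + y^3 * (1/8 - 15/64*y + 3/32*y^2 + y^3/64)"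
    by (simp add: Ud_def power2_eq_square power3_eq_cube algebra_simps)
  moreover have "y^3 * (1/8 - 15/64*y + 3/32*y^2 + y^3/64) \<ge> 0" using assms by (intro mult_nonneg_nonneg) auto
  ultimately have u: "(1-y)^3 \<le> (Ud y)^2" by linarith
  have "Ld y \<ge> 0" using assms
  proof -
    have "y^2 \<ge> 0" by simp
    thus ?thesis using assms by (simp add: Ld_def)
  qed
  moreover have "Ud y \<ge> 0" using \<open>Ld y \<ge> 0\<close> assms by (simp add: Ud_def Ld_def)
  ultimately show ?thesis unfolding e using l u by (auto intro: real_le_rsqrt real_le_lsqrt)
qed

lemma ratA0:
  fixes m a b c d e :: real assumes "m \<ge> 0" "a = m+2" "b = m+3" "c = m+4" "d = m+5" "e = m+6"
  shows "2*(d/c) + c/b + e/d - 2 * U2 (1/b) * (e/d) - 2 * (c/b) * Ud (1/a)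
   = (540 + 990*m + 2671/4*m^2 + 827/4*m^3 + 117/4*m^4 + 3/2*m^5) / (a^3*b^2*c*d)"
proof -
  have "a > 0" "b > 0" "c > 0" "d > 0" "e > 0" using assms by auto
  hence "a \<noteq> 0" "b \<noteq> 0" "c \<noteq> 0" "d \<noteq> 0" by auto
  thus ?thesis unfolding U2_def Ud_def
    apply (simp add: field_simps)
    using assms(2-6) by algebra
qed

lemma ratA:
  fixes m :: real assumes "m \<ge> 0"
  shows "0 \<le> 2*((m+5)/(m+4)) + (m+4)/(m+3) + (m+6)/(m+5)
     - 2 * U2 (1/(m+3)) * ((m+6)/(m+5)) - 2 * ((m+4)/(m+3)) * Ud (1/(m+2))"
  using ratA0[OF assms refl refl refl refl refl] assms by simp

lemma ratB0:
  fixes m a b c d e :: real assumes "m \<ge> 0" "a = m+2" "b = m+3" "c = m+4" "d = m+5" "e = m+6"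
  shows "L3 (2/b) * (e/d) - 2*(d/c) - c/b - e/d + L3 (1/b) * (e/d) + (c/b) * Ld (1/a)
     + (c/b) * Ld (1/a) * Ld (1/c)
   = (20349/16 + 208569/64*m + 212219/64*m^2 + 109231/64*m^3 + 30121/64*m^4 + 1061/16*m^5 + 15/4*m^6) /
     (a^2*b^3*c^2*d)"
proof -
  have "a > 0" "b > 0" "c > 0" "d > 0" "e > 0" using assms by auto
  hence "a \<noteq> 0" "b \<noteq> 0" "c \<noteq> 0" "d \<noteq> 0" by auto
  thus ?thesis unfolding L3_def Ld_def
    apply (simp add: field_simps)
    using assms(2-6) by algebra
qed

lemma ratB:
  fixes m :: real assumes "m \<ge> 0"
  shows "0 \<le> L3 (2/(m+3)) * ((m+6)/(m+5)) - 2*((m+5)/(m+4)) - (m+4)/(m+3) - (m+6)/(m+5)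
     + L3 (1/(m+3)) * ((m+6)/(m+5)) + ((m+4)/(m+3)) * Ld (1/(m+2))
     + ((m+4)/(m+3)) * Ld (1/(m+2)) * Ld (1/(m+4))"
  using ratB0[OF assms refl refl refl refl refl] assms by simp

lemma Ld_nonneg: "0 \<le> y \<Longrightarrow> y \<le> 1/2 \<Longrightarrow> Ld y \<ge> 0"
proof -
  assume "0 \<le> y" "y \<le> 1/2"
  have "y^2 \<ge> 0" by simp
  thus ?thesis using \<open>0 \<le> y\<close> \<open>y \<le> 1/2\<close> by (simp add: Ld_def)
qed

lemma mu_ratio: "u > 0 \<Longrightarrow> v > 0 \<Longrightarrow> mu u / mu v = (real u / real v) * sqrt (real u / real v)"
  by (simp add: mu_eq ratio)

lemma mu_pos: "k > 0 \<Longrightarrow> mu k > 0"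
  by (simp add: mu_eq)

lemma step:
  fixes m0 m1 m2 m3 d0 d1 d2 G e :: real
  assumes pos: "m0>0" "m1>0" "m2>0" "m3>0" "d0>0" "d1>0" "d2>0" "e>0"
  assumes G1: "(m1/m0)*(m2/m1) < G" and G2: "G < (m1/m0)*(m2/m1)*(m3/m2)"
   and A: "0 \<le> 2*d1+d0+d2 - 2*(m3/m2)*d2 - 2*d0*(m0/m1)"
   and B: "2*d1+d0+d2 - (m3/m2)*d2 - d0*(m0/m1) - d0*(m0/m1)*(m2/m3) \<le> (m3/m2)*e*d2"
  shows "(m2/m1)*(m3/m2) < m2/(m1*d1*d2) * (2*d1^2 + d0*d1 + d1*d2 - m3/m2*d1*d2 - m0/m1*d0*d1 - m2/(m1*G)*d0*d1)
       \<and> m2/(m1*d1*d2) * (2*d1^2 + d0*d1 + d1*d2 - m3/m2*d1*d2 - m0/m1*d0*d1 - m2/(m1*G)*d0*d1) < (m2/m1)*(m3/m2)*e"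
proof -
  define a where "a = m1/m0"
  define b where "b = m2/m1"
  define c where "c = m3/m2"
  define r where "r = m0/m1"
  define q where "q = m2/(m1*G)"
  have ap: "a > 0" "b > 0" "c > 0" using pos by (auto simp: a_def b_def c_def)
  have Gp: "G > 0" using G1 ap a_def b_def by (smt (verit) mult_pos_pos)
  have ra: "r = 1/a" by (simp add: r_def a_def)
  have qb: "q = b/G" by (simp add: q_def b_def)
  have ic: "m2/m3 = 1/c" by (simp add: c_def)
  have q1: "q < r"
  proof -
    have "b/G < 1/a" using G1 ap Gp unfolding a_def[symmetric] b_def[symmetric]
      by (simp add: field_simps)
    thus ?thesis using qb ra by simp
  qed
  have q2: "r/c < q"
  proof -
    have "1/(a*c) < b/G" using G2 ap Gp unfolding a_def[symmetric] b_def[symmetric] c_def[symmetric]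
      by (simp add: field_simps)
    thus ?thesis using qb ra by simp
  qed
  define J where "J = 2*d1+d0+d2 - c*d2 - r*d0 - q*d0"
  have eq: "m2/(m1*d1*d2) * (2*d1^2 + d0*d1 + d1*d2 - m3/m2*d1*d2 - m0/m1*d0*d1 - m2/(m1*G)*d0*d1) = b/d2 * J"
    using pos unfolding J_def b_def c_def r_def q_def by (simp add: field_simps power2_eq_square)
  have J1: "J > c*d2"
  proof -
    have "q*d0 < r*d0" using q1 pos by simp
    moreover have "d0*r = r*d0" by simp
    ultimately show ?thesis using A unfolding J_def c_def[symmetric] r_def[symmetric] by linarith
  qed
  have J2: "J < c*e*d2"
  proof -
    have "(r/c)*d0 < q*d0" using q2 pos by (intro mult_strict_right_mono) auto
    moreover have "d0*r*(1/c) = (r/c)*d0" by simp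
    moreover have "d0*r = r*d0" by simp
    ultimately show ?thesis using B unfolding J_def c_def[symmetric] r_def[symmetric] ic by linarith
  qed
  have "b*c = b/d2*(c*d2)" using pos by simp
  also have "\<dots> < b/d2*J" using J1 ap pos by (intro mult_strict_left_mono) auto
  finally have L: "b*c < b/d2*J" .
  have "b/d2*J < b/d2*(c*e*d2)" using J2 ap pos by (intro mult_strict_left_mono) auto
  also have "\<dots> = b*c*e" using pos by simp
  finally have U: "b/d2*J < b*c*e" .
  show ?thesis using L U eq unfolding b_def c_def by simp
qed

lemma base_case: "p 1 * p 2 < g 1 \<and> g 1 < p 1 * p 2 * p 3"
proof -
  have s4: "sqrt 4 = (2::real)" by (simp add: real_sqrt_eq_iff)
  have m1: "mu 1 = 1" by (simp add: mu_eq)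
  have m4: "mu 4 = 8" by (simp add: mu_eq s4)
  have m2: "mu 2 = 2*sqrt 2" by (simp add: mu_eq)
  have m3: "mu 3 = 3*sqrt 3" by (simp add: mu_eq)
  have p12: "p 1 * p 2 = 3*sqrt 3" unfolding p_def by (simp add: mu_eq)
  have p123: "p 1 * p 2 * p 3 = 8" unfolding p_def by (simp add: mu_eq s4)
  have g1: "g 1 = 26/3*sqrt 2 - 3*sqrt 3"
    using g.simps(2) by (simp add: mu_eq delta_def)
  have a1: "sqrt 2 > (1.414::real)" by (rule real_less_rsqrt) (simp add: power2_eq_square)
  have a2: "sqrt 2 < (1.415::real)" 
  proof -
    have "(2::real) < 1.415^2" by (simp add: power2_eq_square)
    hence "sqrt 2 < sqrt (1.415^2)" by (rule real_sqrt_less_mono)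
    thus ?thesis by simp
  qed
  have b1: "sqrt 3 > (1.732::real)" by (rule real_less_rsqrt) (simp add: power2_eq_square)
  have b2: "sqrt 3 < (1.733::real)" 
  proof -
    have "(3::real) < 1.733^2" by (simp add: power2_eq_square)
    hence "sqrt 3 < sqrt (1.733^2)" by (rule real_sqrt_less_mono)
    thus ?thesis by simp
  qed
  have p3: "3*sqrt 3 * p 3 = 8" using p123 p12 by simp
  show ?thesis unfolding p12 g1 p3 using a1 a2 b1 b2 by simp
qed

lemma g_rec:
  assumes "N \<ge> 2"
  shows "g N = mu (N+1) / (mu N * delta (N+1) * delta (N+2)) *
     (2 * (delta (N+1))^2 + delta N * delta (N+1) + delta (N+1) * delta (N+2)
      - mu (N+2) / mu (N+1) * delta (N+1) * delta (N+2)
      - mu (N-1) / mu N * delta N * delta (N+1)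
      - mu (N+1) / (mu N * g (N-1)) * delta N * delta (N+1))"
proof -
  obtain k where "N = Suc (Suc k)" using assms by (metis add_2_eq_Suc le_Suc_ex)
  thus ?thesis by (simp add: Let_def)
qed

lemma indstep:
  assumes N: "N \<ge> 2"
  and IH: "p (N-1) * p N < g (N-1) \<and> g (N-1) < p (N-1) * p N * p (N+1)"
  shows "p N * p (N+1) < g N \<and> g N < p N * p (N+1) * p (N+2)"
proof -
  define m where "m = real N - 2"
  have m0: "m \<ge> 0" using N by (simp add: m_def)
  have rN: "real N = m + 2" by (simp add: m_def)
  have rN1: "real (N-1) = m + 1"
  proof -
    obtain k where "N = Suc k" using N by (cases N) auto
    thus ?thesis unfolding m_def by simp
  qed
  have d0: "delta N = (m+4)/(m+3)" by (simp add: delta_def rN add.commute add.left_commute)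
  have d1: "delta (N+1) = (m+5)/(m+4)" by (simp add: delta_def rN add.commute add.left_commute)
  have d2: "delta (N+2) = (m+6)/(m+5)" by (simp add: delta_def rN add.commute add.left_commute)
  define c where "c = mu (N+2) / mu (N+1)"
  define r where "r = mu (N-1) / mu N"
  define ce where "ce = mu (N+3) / mu (N+1)"
  define ic where "ic = mu (N+1) / mu (N+2)"
  have c_eq: "c = (1 + 1/(m+3)) * sqrt (1 + 1/(m+3))"
  proof -
    have "real (N+2) / real (N+1) = 1 + 1/(m+3)" using m0 by (simp add: rN field_simps)
    thus ?thesis unfolding c_def by (subst mu_ratio) auto
  qed
  have ce_eq: "ce = (1 + 2/(m+3)) * sqrt (1 + 2/(m+3))"
  proof -
    have "real (N+3) / real (N+1) = 1 + 2/(m+3)" using m0 by (simp add: rN field_simps)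
    thus ?thesis unfolding ce_def by (subst mu_ratio) auto
  qed
  have r_eq: "r = (1 - 1/(m+2)) * sqrt (1 - 1/(m+2))"
  proof -
    have "real (N-1) / real N = 1 - 1/(m+2)" unfolding rN1 rN using m0 by (simp add: field_simps)
    thus ?thesis unfolding r_def using N by (subst mu_ratio) auto
  qed
  have ic_eq: "ic = (1 - 1/(m+4)) * sqrt (1 - 1/(m+4))"
  proof -
    have "real (N+1) / real (N+2) = 1 - 1/(m+4)" using m0 by (simp add: rN field_simps)
    thus ?thesis unfolding ic_def by (subst mu_ratio) auto
  qed
  have cU: "c \<le> U2 (1/(m+3))" and cL: "L3 (1/(m+3)) \<le> c"
    using up_bounds[of "1/(m+3)"] m0 unfolding c_eq by auto
  have ceL: "L3 (2/(m+3)) \<le> ce"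
    using up_bounds[of "2/(m+3)"] m0 unfolding ce_eq by auto
  have rU: "r \<le> Ud (1/(m+2))" and rL: "Ld (1/(m+2)) \<le> r"
    using down_bounds[of "1/(m+2)"] m0 unfolding r_eq by auto
  have icL: "Ld (1/(m+4)) \<le> ic"
    using down_bounds[of "1/(m+4)"] m0 unfolding ic_eq by auto
  have Ly: "Ld (1/(m+2)) \<ge> 0" using Ld_nonneg[of "1/(m+2)"] m0 by auto
  have Lw: "Ld (1/(m+4)) \<ge> 0" using Ld_nonneg[of "1/(m+4)"] m0 by auto
  have dp: "delta N > 0" "delta (N+1) > 0" "delta (N+2) > 0" by (simp_all add: delta_def)
  have mp: "mu (N-1) > 0" "mu N > 0" "mu (N+1) > 0" "mu (N+2) > 0" "mu (N+3) > 0"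
    using N by (simp_all add: mu_pos)
  have e_pos: "p (N+2) > 0" by (simp add: p_def mu_pos)
  have ce_e: "ce = c * p (N+2)" using mp unfolding ce_def c_def p_def
    by (simp add: numeral_3_eq_3 numeral_2_eq_2)
  have A: "0 \<le> 2*delta (N+1)+delta N+delta (N+2) - 2*c*delta (N+2) - 2*delta N*r"
  proof -
    have "c*delta (N+2) \<le> U2 (1/(m+3))*delta (N+2)" using cU dp by (intro mult_right_mono) auto
    moreover have "delta N*r \<le> delta N * Ud (1/(m+2))" using rU dp by (intro mult_left_mono) auto
    ultimately show ?thesis using ratA[OF m0] unfolding d0 d1 d2 by linarith
  qed
  have B: "2*delta (N+1)+delta N+delta (N+2) - c*delta (N+2) - delta N*r - delta N*r*ic \<le> ce*delta (N+2)"
  proof -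
    have "L3 (2/(m+3))*delta (N+2) \<le> ce*delta (N+2)" using ceL dp by (intro mult_right_mono) auto
    moreover have "L3 (1/(m+3))*delta (N+2) \<le> c*delta (N+2)" using cL dp by (intro mult_right_mono) auto
    moreover have "delta N * Ld (1/(m+2)) \<le> delta N*r" using rL dp by (intro mult_left_mono) auto
    moreover have "delta N * (Ld (1/(m+2)) * Ld (1/(m+4))) \<le> delta N*(r*ic)"
      using rL icL dp Ly Lw by (intro mult_left_mono mult_mono) auto
    ultimately show ?thesis using ratB[OF m0] unfolding d0 d1 d2 by (simp add: algebra_simps)
  qed
  have IH': "(mu N / mu (N-1))*(mu (N+1)/mu N) < g (N-1) \<and> g (N-1) < (mu N / mu (N-1))*(mu (N+1)/mu N)*(mu (N+2)/mu (N+1))"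
    using IH N unfolding p_def by (simp add: Suc_diff_Suc numeral_2_eq_2)
  have B': "2*delta (N+1)+delta N+delta (N+2) - (mu (N+2) / mu (N+1))*delta (N+2) - delta N*(mu (N-1) / mu N)
     - delta N*(mu (N-1) / mu N)*(mu (N+1) / mu (N+2)) \<le> (mu (N+2) / mu (N+1))*p (N+2)*delta (N+2)"
    using B unfolding ce_e c_def r_def ic_def .
  note S = step[OF mp(1) mp(2) mp(3) mp(4) dp(1) dp(2) dp(3) e_pos conjunct1[OF IH'] conjunct2[OF IH']
     A[unfolded c_def r_def] B']
  have pN: "p N = mu (N+1) / mu N" "p (N+1) = mu (N+2) / mu (N+1)" by (simp_all add: p_def)
  show ?thesis using S unfolding g_rec[OF N, symmetric] pN .
qed

theorem lemma4p2:
  fixes n :: nat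
  assumes "n \<ge> 1"
  shows "p n * p (n+1) < g n \<and> g n < p n * p (n+1) * p (n+2)"
  using assms
proof (induction n rule: nat_induct_at_least)
  case base
  have e: "(1::nat)+1 = 2" "(1::nat)+2 = 3" by simp_all
  show ?case unfolding e using base_case .
next
  case (Suc k)
  have N: "Suc k \<ge> 2" using Suc.hyps by simp
  have "p (Suc k - 1) * p (Suc k) < g (Suc k - 1) \<and> g (Suc k - 1) < p (Suc k - 1) * p (Suc k) * p (Suc k + 1)"
    using Suc.IH by simp
  from indstep[OF N this] show ?case by simp
qed

end
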